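(* If $(\rho,V)$ is an $R[G_n]$-module of $\psi$-Whittaker type, then the restriction map $\mathcal{W}(V,\psi_R)\to\mathrm{Ind}_{N_n}^{P_n}\psi_R$, $W\mapsto W|_{P_n}$, is surjective.
   Context: Let $p$ be a prime, $q$ a power of $p$, $G_n=\mathrm{GL}_n(\mathbb{F}_q)$, $R$ a commutative Noetherian $\mathbb{Z}[\frac1p,\zeta_p]$-algebra with $0\ne1$. $N_n$ is the upper unipotent subgroup and $P_n$ the mirabolic subgroup (matrices with last row $(0,\dots,0,1)$). Fix nontrivial $\psi:(\mathbb{F}_q,+)\to\mathbb{Z}[\frac1p,\zeta_p]^\times$, with image $\psi_R$ in $R^\times$, a character of $N_n$ via $u\mapsto\psi_R(\sum_iu_{i,i+1})$. $\mathrm{Ind}_{N_n}^{H}\psi_R=\{f:H\to R: f(uh)=\psi_R(u)f(h)\}$ for $H=P_n,G_n$. $V$ is of $\psi$-Whittaker type if its $(N_n,\psi_R)$-coinvariants are free of rank one over $R$; a generator $\lambda$ of their $R$-dual gives $V\to\mathrm{Ind}_{N_n}^{G_n}\psi_R$, $v\mapsto(g\mapsto\lambda(\overline{gv}))$, with image the Whittaker model $\mathcal{W}(V,\psi_R)$. *)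

theory Defs
  imports Main "HOL-Number_Theory.Cong" "Jordan_Normal_Form.Matrix"
begin

definition ring_ideal :: "'r::comm_ring_1 set \<Rightarrow> bool" where
  "ring_ideal I \<longleftrightarrow> 0 \<in> I \<and> (\<forall>x\<in>I. \<forall>y\<in>I. x + y \<in> I) \<and> (\<forall>r. \<forall>x\<in>I. r * x \<in> I)"

definition noetherian_ring :: "'r::comm_ring_1 itself \<Rightarrow> bool" where
  "noetherian_ring _ \<longleftrightarrow>
     (\<forall>I :: nat \<Rightarrow> 'r set. (\<forall>k. ring_ideal (I k)) \<and> (\<forall>k. I k \<subseteq> I (Suc k))
        \<longrightarrow> (\<exists>m. \<forall>k\<ge>m. I k = I m))"

definition GL :: "nat \<Rightarrow> 'f::field mat set" where
  "GL n = {A. A \<in> carrier_mat n n \<and> invertible_mat A}"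

definition unip :: "nat \<Rightarrow> 'f::field mat set" where
  "unip n = {A. A \<in> carrier_mat n n \<and> (\<forall>i<n. A $$ (i,i) = 1) \<and>
                 (\<forall>i<n. \<forall>j<n. j < i \<longrightarrow> A $$ (i,j) = 0)}"

definition mirabolic :: "nat \<Rightarrow> 'f::field mat set" where
  "mirabolic n = {A. A \<in> GL n \<and> (\<forall>j<n. A $$ (n - 1, j) = (if j = n - 1 then 1 else 0))}"

definition psiN :: "nat \<Rightarrow> ('f::field \<Rightarrow> 'r) \<Rightarrow> 'f mat \<Rightarrow> 'r" where
  "psiN n \<psi> u = \<psi> (\<Sum>i<n - 1. u $$ (i, i + 1))"

definition is_rep :: "nat \<Rightarrow> ('r::comm_ring_1 \<Rightarrow> 'v::ab_group_add \<Rightarrow> 'v)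
                      \<Rightarrow> ('f::field mat \<Rightarrow> 'v \<Rightarrow> 'v) \<Rightarrow> bool" where
  "is_rep n scale \<rho> \<longleftrightarrow> Modules.module scale \<and>
     (\<forall>g\<in>GL n. Modules.module_hom scale scale (\<rho> g)) \<and>
     (\<forall>g\<in>GL n. \<forall>h\<in>GL n. \<rho> (g * h) = \<rho> g \<circ> \<rho> h) \<and>
     \<rho> (1\<^sub>m n) = id"

definition coinv_kernel :: "nat \<Rightarrow> ('r::comm_ring_1 \<Rightarrow> 'v::ab_group_add \<Rightarrow> 'v)
      \<Rightarrow> ('f::field mat \<Rightarrow> 'v \<Rightarrow> 'v) \<Rightarrow> ('f \<Rightarrow> 'r) \<Rightarrow> 'v set" where
  "coinv_kernel n scale \<rho> \<psi> =
     Modules.module.span scale {\<rho> u v - scale (psiN n \<psi> u) v | u v. u \<in> unip n}"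

definition lin_form :: "('r::comm_ring_1 \<Rightarrow> 'v::ab_group_add \<Rightarrow> 'v) \<Rightarrow> ('v \<Rightarrow> 'r) \<Rightarrow> bool" where
  "lin_form scale f \<longleftrightarrow> Modules.module_hom scale (*) f"

(* psi-Whittaker type: V_{(N,psi)} = V / K is free of rank one, i.e. V/K \<cong> R *)
definition whittaker_type :: "nat \<Rightarrow> ('r::comm_ring_1 \<Rightarrow> 'v::ab_group_add \<Rightarrow> 'v)
      \<Rightarrow> ('f::field mat \<Rightarrow> 'v \<Rightarrow> 'v) \<Rightarrow> ('f \<Rightarrow> 'r) \<Rightarrow> bool" where
  "whittaker_type n scale \<rho> \<psi> \<longleftrightarrow>
     (\<exists>f. lin_form scale f \<and> surj f \<and> (\<forall>v. f v = 0 \<longleftrightarrow> v \<in> coinv_kernel n scale \<rho> \<psi>))"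

(* lam (composed with V \<rightarrow> V_{(N,psi)}) is a generator of the R-dual of the coinvariants:
   Hom_R(V_{(N,psi)},R) is identified with linear forms on V vanishing on the kernel *)
definition dual_generator :: "nat \<Rightarrow> ('r::comm_ring_1 \<Rightarrow> 'v::ab_group_add \<Rightarrow> 'v)
      \<Rightarrow> ('f::field mat \<Rightarrow> 'v \<Rightarrow> 'v) \<Rightarrow> ('f \<Rightarrow> 'r) \<Rightarrow> ('v \<Rightarrow> 'r) \<Rightarrow> bool" where
  "dual_generator n scale \<rho> \<psi> lam \<longleftrightarrow>
     lin_form scale lam \<and> (\<forall>v\<in>coinv_kernel n scale \<rho> \<psi>. lam v = 0) \<and>
     (\<forall>\<mu>. lin_form scale \<mu> \<and> (\<forall>v\<in>coinv_kernel n scale \<rho> \<psi>. \<mu> v = 0)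
          \<longrightarrow> (\<exists>r. \<forall>v. \<mu> v = r * lam v))"

(* Ind_{N_n}^{P_n} psi, functions represented by their values on P_n *)
definition ind_P :: "nat \<Rightarrow> ('f::field \<Rightarrow> 'r::comm_ring_1) \<Rightarrow> ('f mat \<Rightarrow> 'r) set" where
  "ind_P n \<psi> = {f. \<forall>u\<in>unip n. \<forall>p\<in>mirabolic n. f (u * p) = psiN n \<psi> u * f p}"

definition whittaker_fun :: "('f::field mat \<Rightarrow> 'v \<Rightarrow> 'v) \<Rightarrow> ('v \<Rightarrow> 'r) \<Rightarrow> 'v \<Rightarrow> 'f mat \<Rightarrow> 'r" where
  "whittaker_fun \<rho> lam v g = lam (\<rho> g v)"

end

theory Submission
  imports Defs "Jordan_Normal_Form.Determinant" "HOL-Library.FuncSet"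
begin


lemma zeta_p: fixes \<zeta> :: "'r::comm_ring_1"
  assumes "(\<Sum>i<p. \<zeta> ^ i) = 0" shows "\<zeta> ^ p = 1"
  using power_diff_1_eq[of \<zeta> p] assms by simp

lemma zeta_mod: fixes \<zeta> :: "'r::comm_ring_1"
  assumes "\<zeta> ^ p = 1" shows "\<zeta> ^ a = \<zeta> ^ (a mod p)"
proof -
  have "\<zeta> ^ a = \<zeta> ^ (p * (a div p) + a mod p)" by (metis div_mult_mod_eq mult.commute)
  also have "\<dots> = \<zeta> ^ (a mod p)" unfolding power_add power_mult assms by simp
  finally show ?thesis .
qed

lemma zeta_cong: fixes \<zeta> :: "'r::comm_ring_1"
  assumes "\<zeta> ^ p = 1" "[a = b] (mod p)" shows "\<zeta> ^ a = \<zeta> ^ b"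
  using zeta_mod[OF assms(1), of a] zeta_mod[OF assms(1), of b] assms(2) unfolding cong_def by simp


lemma pow_fix: fixes a y :: "'r::comm_ring_1" assumes "a * y = y" shows "a ^ i * y = y"
  by (induction i) (simp_all add: mult.assoc assms)

lemma char_facts:
  fixes \<zeta> :: "'r::comm_ring_1" and c :: "'f::field \<Rightarrow> nat" and \<psi>R :: "'f \<Rightarrow> 'r"
  assumes p_prime: "prime p"
    and p_unit: "\<exists>t::'r. of_nat p * t = 1"
    and zeta_cyclo: "(\<Sum>i<p. \<zeta> ^ i) = 0"
    and c_add: "\<And>x y. [c (x + y) = c x + c y] (mod p)"
    and c_nontriv: "\<exists>x. \<not> p dvd c x"
    and psiR_def: "\<And>x. \<psi>R x = \<zeta> ^ c x"
  shows "\<And>x y. \<psi>R (x + y) = \<psi>R x * \<psi>R y" and "\<psi>R 0 = 1"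
    and "\<exists>t0. \<forall>y. (\<psi>R t0 - 1) * y = 0 \<longrightarrow> y = 0"
proof -
  have zp: "\<zeta> ^ p = 1" by (rule zeta_p[OF zeta_cyclo])
  show "\<psi>R (x + y) = \<psi>R x * \<psi>R y" for x y
    using zeta_cong[OF zp c_add[of x y]] by (simp add: psiR_def power_add)
  have "[c 0 + 0 = c 0 + c 0] (mod p)" using c_add[of 0 0] by simp
  hence "[0 = c 0] (mod p)" using cong_add_lcancel_nat by blast
  thus "\<psi>R 0 = 1" using zeta_cong[OF zp, of 0 "c 0"] by (simp add: psiR_def)
  obtain x where x: "\<not> p dvd c x" using c_nontriv by blast
  have cop: "coprime (c x) p" using prime_imp_coprime[OF p_prime x] by (simp add: coprime_commute)
  obtain i where i: "[c x * i = Suc 0] (mod p)" using cong_solve_coprime_nat[OF cop] by blast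
  obtain t where t: "of_nat p * t = (1::'r)" using p_unit by blast
  show "\<exists>t0. \<forall>y. (\<psi>R t0 - 1) * y = 0 \<longrightarrow> y = 0"
  proof (intro exI allI impI)
    fix y assume "(\<psi>R x - 1) * y = 0"
    hence "\<zeta> ^ c x * y - 1 * y = 0" by (simp only: psiR_def left_diff_distrib)
    hence "\<zeta> ^ c x * y = y" by simp
    hence "(\<zeta> ^ c x) ^ i * y = y" by (rule pow_fix)
    hence "\<zeta> ^ (c x * i) * y = y" by (simp add: power_mult)
    hence "\<zeta> * y = y" using zeta_cong[OF zp i] by simp
    hence "\<And>j. \<zeta> ^ j * y = y" by (rule pow_fix)
    hence "(\<Sum>j<p. \<zeta> ^ j) * y = of_nat p * y" by (simp add: sum_distrib_right)
    hence "of_nat p * y = 0" using zeta_cyclo by simp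
    have "y = (of_nat p * t) * y" using t by simp
    also have "\<dots> = t * (of_nat p * y)" by (simp only: ac_simps)
    also have "\<dots> = 0" using \<open>of_nat p * y = 0\<close> by simp
    finally show "y = 0" .
  qed
qed


definition addsub :: "'a::ab_group_add set \<Rightarrow> bool" where
  "addsub A \<longleftrightarrow> 0 \<in> A \<and> (\<forall>x\<in>A. \<forall>y\<in>A. x + y \<in> A) \<and> (\<forall>x\<in>A. - x \<in> A)"

lemma of_nat_mod_char: assumes "of_nat p = (0::'f::comm_ring_1)"
  shows "(of_nat (n mod p) :: 'f) = of_nat n"
proof -
  have "(of_nat n :: 'f) = of_nat (p * (n div p) + n mod p)" by (metis div_mult_mod_eq mult.commute)
  also have "\<dots> = of_nat (n mod p)" unfolding of_nat_add of_nat_mult assms by simp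
  finally show ?thesis by simp
qed

lemma addsub_ofnat: assumes "addsub A" "y \<in> A" shows "(of_nat e :: 'f::comm_ring_1) * y \<in> A"
  using assms by (induction e) (auto simp: addsub_def algebra_simps)

lemma addsub_extend:
  fixes A :: "'f::{finite,field} set"
  assumes A: "addsub A" and x: "x \<notin> A" and p: "prime p" and ch: "of_nat p = (0::'f)"
  defines "A' \<equiv> (\<lambda>(a,j). a + of_nat j * x) ` (A \<times> {..<p})"
  shows "addsub A'" "card A' = card A * p" "x \<in> A'"
proof -
  have p1: "1 < p" using p prime_gt_1_nat by blast
  show "x \<in> A'" unfolding A'_def
    by (rule image_eqI[where x="(0,1)"]) (use A p1 in \<open>auto simp: addsub_def\<close>)
  have pos: "0 < p" using p1 by simp
  show "addsub A'"
    unfolding addsub_def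
  proof (intro conjI ballI)
    show "0 \<in> A'" unfolding A'_def
      by (rule image_eqI[where x="(0,0)"]) (use A pos in \<open>auto simp: addsub_def\<close>)
  next
    fix y z assume "y \<in> A'" "z \<in> A'"
    then obtain a j b i where y: "y = a + of_nat j * x" and z: "z = b + of_nat i * x"
      and ab: "a \<in> A" "b \<in> A" "j < p" "i < p" unfolding A'_def by auto
    have "y + z = (a + b) + of_nat ((j + i) mod p) * x"
      unfolding y z of_nat_mod_char[OF ch] by (simp add: algebra_simps)
    moreover have "a + b \<in> A" using A ab by (auto simp: addsub_def)
    ultimately show "y + z \<in> A'" unfolding A'_def using pos
      by (intro image_eqI[where x="(a+b, (j+i) mod p)"]) auto
  next
    fix y assume "y \<in> A'"
    then obtain a j where y: "y = a + of_nat j * x" and ab: "a \<in> A" "j < p" unfolding A'_def by auto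
    have "(of_nat ((p - j) mod p) :: 'f) = of_nat (p - j)" by (rule of_nat_mod_char[OF ch])
    also have "\<dots> = - of_nat j" using ab ch by (simp add: of_nat_diff)
    finally have "- y = (- a) + of_nat ((p - j) mod p) * x" unfolding y by simp
    moreover have "- a \<in> A" using A ab by (auto simp: addsub_def)
    ultimately show "- y \<in> A'" unfolding A'_def using pos
      by (intro image_eqI[where x="(-a, (p - j) mod p)"]) auto
  qed
  have key: "False" if "a \<in> A" "b \<in> A" "i < j" "j < p" "a + of_nat j * x = b + of_nat i * x" for a b i j
  proof -
    have "of_nat (j - i) * x = b - a" using that by (simp add: of_nat_diff algebra_simps)
    moreover have "b - a \<in> A" using A that unfolding addsub_def by (metis diff_conv_add_uminus)
    ultimately have d: "of_nat (j - i) * x \<in> A" by simp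
    have "\<not> p dvd (j - i)" using that by (auto dest: dvd_imp_le)
    hence cop: "coprime (j - i) p" using prime_imp_coprime[OF p] coprime_commute by blast
    obtain e where e: "[(j - i) * e = Suc 0] (mod p)" using cong_solve_coprime_nat[OF cop] by blast
    have "(of_nat e :: 'f) * (of_nat (j - i) * x) \<in> A" by (rule addsub_ofnat[OF A d])
    moreover have "(of_nat e :: 'f) * (of_nat (j - i) * x) = of_nat (((j - i) * e) mod p) * x"
      unfolding of_nat_mod_char[OF ch] of_nat_mult by (simp only: ac_simps)
    moreover have "((j - i) * e) mod p = 1" using e p1 unfolding cong_def by simp
    ultimately show False using x by simp
  qed
  have inj: "inj_on (\<lambda>(a,j). a + of_nat j * x) (A \<times> {..<p})"
  proof (rule inj_onI, clarsimp)
    fix a j b i assume h: "a \<in> A" "j < p" "b \<in> A" "i < p" "a + of_nat j * x = b + of_nat i * x"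
    show "a = b \<and> j = i"
    proof (cases i j rule: linorder_cases)
      case less thus ?thesis using key[of a b i j] h by simp
    next
      case equal thus ?thesis using h by simp
    next
      case greater thus ?thesis using key[of b a j i] h by simp
    qed
  qed
  show "card A' = card A * p" unfolding A'_def using card_image[OF inj] by (simp add: card_cartesian_product)
qed

lemma card_field_ppow:
  assumes p: "prime p" and ch: "of_nat p = (0::'f::{finite,field})"
  shows "\<exists>k. card (UNIV::'f set) = p ^ k"
proof -
  have main: "\<forall>A::'f set. addsub A \<and> (\<exists>k. card A = p ^ k) \<and> card (UNIV::'f set) - card A = m \<longrightarrow> (\<exists>k. card (UNIV::'f set) = p ^ k)" for m
  proof (induction m rule: less_induct)
    case (less m)
    show ?case
    proof (intro allI impI)
      fix A :: "'f set" assume h: "addsub A \<and> (\<exists>k. card A = p ^ k) \<and> card (UNIV::'f set) - card A = m"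
      then obtain k where k: "card A = p ^ k" by blast
      show "\<exists>k. card (UNIV::'f set) = p ^ k"
      proof (cases "A = UNIV")
        case True thus ?thesis using k by auto
      next
        case False
        then obtain x where x: "x \<notin> A" by blast
        define A' where "A' \<equiv> (\<lambda>(a,j). a + of_nat j * x) ` (A \<times> {..<p})"
        note E = addsub_extend[OF conjunct1[OF h] x p ch, folded A'_def]
        have "card A > 0" using h by (auto simp: addsub_def card_gt_0_iff)
        moreover have "p > 1" using p prime_gt_1_nat by blast
        ultimately have "card A' > card A" using E(2) by simp
        moreover have "card A' \<le> card (UNIV::'f set)" by (simp add: card_mono)
        moreover have "card A < card (UNIV::'f set)" using False by (metis finite_UNIV psubsetI subset_UNIV psubset_card_mono)
        ultimately have "card (UNIV::'f set) - card A' < m" using h by linarith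
        moreover have "card A' = p ^ Suc k" using E(2) k by simp
        ultimately show ?thesis using less E(1) by blast
      qed
    qed
  qed
  have "addsub {0::'f}" by (simp add: addsub_def)
  moreover have "card {0::'f} = p ^ 0" by simp
  ultimately show ?thesis using main[of "card (UNIV::'f set) - card {0::'f}"] by blast
qed




lemma mult_entry:
  assumes "A \<in> carrier_mat n n" "B \<in> carrier_mat n n" "i < n" "j < n"
  shows "(A * B) $$ (i,j) = (\<Sum>l\<in>{0..<n}. A $$ (i,l) * B $$ (l,j))"
  using assms by (simp add: scalar_prod_def)

lemma GL_iff: "(A :: 'f::field mat) \<in> GL n \<longleftrightarrow> A \<in> carrier_mat n n \<and> det A \<noteq> 0"
proof
  assume "A \<in> GL n"
  then obtain B where A: "A \<in> carrier_mat n n" and AB: "A * B = 1\<^sub>m n" and BA: "B * A = 1\<^sub>m (dim_row B)"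
    unfolding GL_def invertible_mat_def inverts_mat_def by auto
  have "dim_col B = n" using arg_cong[OF AB, of dim_col] by simp
  moreover have "dim_row B = n" using arg_cong[OF BA, of dim_col] A by simp
  ultimately have B: "B \<in> carrier_mat n n" by auto
  have "det A * det B = 1" using det_mult[OF A B] AB by simp
  thus "A \<in> carrier_mat n n \<and> det A \<noteq> 0" using A by auto
next
  assume h: "A \<in> carrier_mat n n \<and> det A \<noteq> 0"
  hence "A \<in> Units (ring_mat TYPE('f) n ())" by (intro det_non_zero_imp_unit) auto
  then obtain B where "B \<in> carrier_mat n n" "B * A = 1\<^sub>m n" "A * B = 1\<^sub>m n"
    unfolding Units_def ring_mat_def by auto
  thus "A \<in> GL n" using h unfolding GL_def invertible_mat_def inverts_mat_def square_mat.simps by auto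
qed

lemma GL_carrier: "A \<in> GL n \<Longrightarrow> A \<in> carrier_mat n n" by (simp add: GL_iff)

lemma GL_mult: assumes "(A :: 'f::field mat) \<in> GL n" "B \<in> GL n" shows "A * B \<in> GL n"
  using assms det_mult[of A n B] by (auto simp: GL_iff)

lemma GL_cancel:
  assumes "(A :: 'f::field mat) \<in> GL n" "B \<in> carrier_mat n n" "C \<in> carrier_mat n n" "A * B = A * C"
  shows "B = C"
proof -
  have A: "A \<in> carrier_mat n n" "det A \<noteq> 0" using assms(1) by (auto simp: GL_iff)
  hence "A \<in> Units (ring_mat TYPE('f) n ())" by (intro det_non_zero_imp_unit) auto
  then obtain A' where A': "A' \<in> carrier_mat n n" "A' * A = 1\<^sub>m n"
    unfolding Units_def ring_mat_def by auto
  have "B = (A' * A) * B" using A' assms(2) by simp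
  also have "\<dots> = A' * (A * B)" using A'(1) A(1) assms(2) by (rule assoc_mult_mat)
  also have "\<dots> = A' * (A * C)" by (simp only: assms(4))
  also have "\<dots> = (A' * A) * C" using A'(1) A(1) assms(3) by (rule assoc_mult_mat[symmetric])
  also have "\<dots> = C" using A' assms(3) by simp
  finally show ?thesis .
qed

lemma GL_cancel_right:
  assumes "(A :: 'f::field mat) \<in> GL n" "B \<in> carrier_mat n n" "C \<in> carrier_mat n n" "B * A = C * A"
  shows "B = C"
proof -
  have A: "A \<in> carrier_mat n n" "det A \<noteq> 0" using assms(1) by (auto simp: GL_iff)
  hence "A \<in> Units (ring_mat TYPE('f) n ())" by (intro det_non_zero_imp_unit) auto
  then obtain A' where A': "A' \<in> carrier_mat n n" "A * A' = 1\<^sub>m n"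
    unfolding Units_def ring_mat_def by auto
  have "B = B * (A * A')" using A' assms(2) by simp
  also have "\<dots> = (B * A) * A'" using assms(2) A(1) A'(1) by (rule assoc_mult_mat[symmetric])
  also have "\<dots> = (C * A) * A'" by (simp only: assms(4))
  also have "\<dots> = C * (A * A')" using assms(3) A(1) A'(1) by (rule assoc_mult_mat)
  also have "\<dots> = C" using A' assms(3) by simp
  finally show ?thesis .
qed

lemma unip_carrier: "u \<in> unip n \<Longrightarrow> u \<in> carrier_mat n n" by (simp add: unip_def)

lemma one_unip: "1\<^sub>m n \<in> unip n" by (simp add: unip_def)

lemma unip_GL: assumes "(u :: 'f::field mat) \<in> unip n" shows "u \<in> GL n"
proof -
  have u: "u \<in> carrier_mat n n" and d: "\<forall>i<n. u $$ (i,i) = 1" and l: "\<forall>i<n. \<forall>j<n. j < i \<longrightarrow> u $$ (i,j) = 0"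
    using assms by (auto simp: unip_def)
  have "upper_triangular u" using u l unfolding upper_triangular_def by auto
  hence "det u = prod_list (diag_mat u)" using det_upper_triangular u by blast
  moreover have "diag_mat u = map (\<lambda>i. 1) [0..<n]" using d u unfolding diag_mat_def by simp
  ultimately have "det u = 1" by (simp add: map_replicate_const)
  thus ?thesis using u by (simp add: GL_iff)
qed

lemma sum_single:
  assumes "finite S" "i \<in> S" "\<And>l. l \<in> S \<Longrightarrow> l \<noteq> i \<Longrightarrow> f l = 0"
  shows "sum f S = f i"
proof -
  have "sum f S = (\<Sum>l\<in>S. if l = i then f i else 0)" using assms by (intro sum.cong) auto
  thus ?thesis using assms by simp
qed

lemma unip_mult: assumes "(u :: 'f::field mat) \<in> unip n" "w \<in> unip n" shows "u * w \<in> unip n"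
proof -
  have u: "u \<in> carrier_mat n n" "\<And>i. i<n \<Longrightarrow> u $$ (i,i) = 1" "\<And>i j. i<n \<Longrightarrow> j<n \<Longrightarrow> j < i \<Longrightarrow> u $$ (i,j) = 0"
    and w: "w \<in> carrier_mat n n" "\<And>i. i<n \<Longrightarrow> w $$ (i,i) = 1" "\<And>i j. i<n \<Longrightarrow> j<n \<Longrightarrow> j < i \<Longrightarrow> w $$ (i,j) = 0"
    using assms by (auto simp: unip_def)
  have diag: "(u * w) $$ (i,i) = 1" if i: "i < n" for i
  proof -
    have "(u * w) $$ (i,i) = (\<Sum>l\<in>{0..<n}. u $$ (i,l) * w $$ (l,i))"
      by (rule mult_entry[OF u(1) w(1) i i])
    also have "\<dots> = u $$ (i,i) * w $$ (i,i)"
    proof (rule sum_single)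
      fix l assume l: "l \<in> {0..<n}" "l \<noteq> i"
      show "u $$ (i,l) * w $$ (l,i) = 0"
      proof (cases "l < i")
        case True hence "u $$ (i,l) = 0" using u(3)[of i l] i l by simp
        thus ?thesis by simp
      next
        case False hence "i < l" using l by simp
        hence "w $$ (l,i) = 0" using w(3)[of l i] i l by simp
        thus ?thesis by simp
      qed
    qed (use i in auto)
    finally show ?thesis using u(2) w(2) i by simp
  qed
  have low: "(u * w) $$ (i,j) = 0" if i: "i < n" "j < n" "j < i" for i j
  proof -
    have "(u * w) $$ (i,j) = (\<Sum>l\<in>{0..<n}. u $$ (i,l) * w $$ (l,j))"
      by (rule mult_entry[OF u(1) w(1) i(1,2)])
    also have "\<dots> = 0"
    proof (rule sum.neutral, rule ballI)
      fix l assume l: "l \<in> {0..<n}"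
      show "u $$ (i,l) * w $$ (l,j) = 0"
      proof (cases "l < i")
        case True hence "u $$ (i,l) = 0" using u(3)[of i l] i l by simp
        thus ?thesis by simp
      next
        case False hence "j < l" using i by simp
        hence "w $$ (l,j) = 0" using w(3)[of l j] i l by simp
        thus ?thesis by simp
      qed
    qed
    finally show ?thesis .
  qed
  show ?thesis using diag low u w by (auto simp: unip_def)
qed

lemma superdiag_mult:
  assumes "(u :: 'f::field mat) \<in> unip n" "w \<in> unip n" "i + 1 < n"
  shows "(u * w) $$ (i, i+1) = u $$ (i, i+1) + w $$ (i, i+1)"
proof -
  have u: "u \<in> carrier_mat n n" "\<And>i. i<n \<Longrightarrow> u $$ (i,i) = 1" "\<And>i j. i<n \<Longrightarrow> j<n \<Longrightarrow> j < i \<Longrightarrow> u $$ (i,j) = 0"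
    and w: "w \<in> carrier_mat n n" "\<And>i. i<n \<Longrightarrow> w $$ (i,i) = 1" "\<And>i j. i<n \<Longrightarrow> j<n \<Longrightarrow> j < i \<Longrightarrow> w $$ (i,j) = 0"
    using assms by (auto simp: unip_def)
  have "(u * w) $$ (i,i+1) = (\<Sum>l\<in>{0..<n}. u $$ (i,l) * w $$ (l,i+1))"
    by (rule mult_entry[OF u(1) w(1)]) (use assms in auto)
  also have "\<dots> = (\<Sum>l\<in>{0..<n}. (if l = i then w $$ (i,i+1) else 0) + (if l = i+1 then u $$ (i,i+1) else 0))"
  proof (rule sum.cong)
    fix l assume l: "l \<in> {0..<n}"
    show "u $$ (i,l) * w $$ (l,i+1) = (if l = i then w $$ (i,i+1) else 0) + (if l = i+1 then u $$ (i,i+1) else 0)"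
    proof (cases "l < i")
      case True thus ?thesis using u(3)[of i l] l assms by auto
    next
      case False
      show ?thesis
      proof (cases "l > i + 1")
        case True thus ?thesis using w(3)[of l "i+1"] l assms by auto
      next
        case False2: False
        hence "l = i \<or> l = i + 1" using False by auto
        thus ?thesis using u(2) w(2) assms by auto
      qed
    qed
  qed simp
  also have "\<dots> = w $$ (i,i+1) + u $$ (i,i+1)" using assms by (simp add: sum.distrib)
  finally show ?thesis by simp
qed

lemma mirabolic_GL: "g \<in> mirabolic n \<Longrightarrow> g \<in> GL n" by (simp add: mirabolic_def)

lemma mirabolic_mult: assumes "(g :: 'f::field mat) \<in> mirabolic n" "y \<in> mirabolic n" shows "g * y \<in> mirabolic n"
proof -
  have g: "g \<in> GL n" "\<And>j. j < n \<Longrightarrow> g $$ (n-1, j) = (if j = n - 1 then 1 else 0)"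
   and y: "y \<in> GL n" "\<And>j. j < n \<Longrightarrow> y $$ (n-1, j) = (if j = n - 1 then 1 else 0)"
    using assms by (auto simp: mirabolic_def)
  have gc: "g \<in> carrier_mat n n" and yc: "y \<in> carrier_mat n n" using g y GL_carrier by auto
  have "(g * y) $$ (n-1, j) = (if j = n - 1 then 1 else 0)" if j: "j < n" for j
  proof -
    have "(g * y) $$ (n-1, j) = (\<Sum>l\<in>{0..<n}. g $$ (n-1,l) * y $$ (l,j))"
      by (rule mult_entry[OF gc yc _ j]) (use j in auto)
    also have "\<dots> = g $$ (n-1,n-1) * y $$ (n-1,j)"
      by (rule sum_single) (use j g in auto)
    finally show ?thesis using g y j by simp
  qed
  thus ?thesis using GL_mult[OF g(1) y(1)] by (simp add: mirabolic_def)
qed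

lemma unip_mirabolic: assumes "(u :: 'f::field mat) \<in> unip n" shows "u \<in> mirabolic n"
  using unip_GL[OF assms] assms unfolding unip_def mirabolic_def
  by (auto simp: neq_iff)

lemma finite_carrier: "finite (carrier_mat n m :: 'f::finite mat set)"
proof -
  let ?S = "{..<n} \<times> {..<m}"
  have "carrier_mat n m \<subseteq> (\<lambda>\<phi>. mat n m \<phi>) ` (PiE ?S (\<lambda>_. (UNIV :: 'f set)))"
  proof
    fix A :: "'f mat" assume A: "A \<in> carrier_mat n m"
    have "A = mat n m (restrict (\<lambda>ij. A $$ ij) ?S)"
    proof (rule eq_matI)
      fix i j assume "i < dim_row (mat n m (restrict (\<lambda>ij. A $$ ij) ?S))" "j < dim_col (mat n m (restrict (\<lambda>ij. A $$ ij) ?S))"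
      hence "i < n" "j < m" by simp_all
      thus "A $$ (i, j) = mat n m (restrict (\<lambda>ij. A $$ ij) ?S) $$ (i, j)" by simp
    qed (use A in simp_all)
    moreover have "restrict (\<lambda>ij. A $$ ij) ?S \<in> PiE ?S (\<lambda>_. UNIV)" by simp
    ultimately show "A \<in> (\<lambda>\<phi>. mat n m \<phi>) ` (PiE ?S (\<lambda>_. UNIV))" by (rule image_eqI)
  qed
  moreover have "finite (PiE ?S (\<lambda>_. (UNIV :: 'f set)))" by (intro finite_PiE) auto
  ultimately show ?thesis using finite_subset by blast
qed

lemma finite_inverse:
  assumes fin: "finite S" and sub: "S \<subseteq> GL n" and one: "1\<^sub>m n \<in> S"
    and cl: "\<And>a b. a \<in> S \<Longrightarrow> b \<in> S \<Longrightarrow> a * b \<in> S" and x: "(x :: 'f::field mat) \<in> S"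
  shows "\<exists>y\<in>S. x * y = 1\<^sub>m n \<and> y * x = 1\<^sub>m n"
proof -
  have "inj_on (\<lambda>y. x * y) S"
    by (rule inj_onI) (use GL_cancel sub x GL_carrier in blast)
  moreover have "(\<lambda>y. x * y) ` S \<subseteq> S" using cl x by auto
  ultimately have "(\<lambda>y. x * y) ` S = S" using endo_inj_surj fin by blast
  hence "1\<^sub>m n \<in> (\<lambda>y. x * y) ` S" using one by simp
  then obtain y where y: "y \<in> S" "x * y = 1\<^sub>m n" by (auto elim!: imageE)
  have xc: "x \<in> carrier_mat n n" using x sub GL_carrier by blast
  have yc: "y \<in> carrier_mat n n" using y sub GL_carrier by blast
  have "y * x = 1\<^sub>m n" using mat_mult_left_right_inverse[OF xc yc y(2)] .
  thus ?thesis using y by blast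
qed




lemma psi_cancel:
  assumes padd: "\<And>x y. \<psi> (x + y) = \<psi> x * \<psi> y" and p0: "\<psi> 0 = (1::'r::comm_ring_1)"
    and "\<psi> (s::'f::field) * z = 0" shows "z = 0"
proof -
  have "z = (\<psi> (-s) * \<psi> s) * z" using padd[of "-s" s] p0 by simp
  also have "\<dots> = \<psi> (-s) * (\<psi> s * z)" by (simp only: ac_simps)
  also have "\<dots> = 0" using assms(3) by simp
  finally show ?thesis .
qed

lemma sum_two_delta:
  assumes "c1 < (n::nat)" "c2 < n"
  shows "(\<Sum>l\<in>{0..<n}. (if l = c1 then X else 0) + (if l = c2 then Y else (0::'a::comm_monoid_add))) = X + Y"
  proof -
  have "(\<Sum>l\<in>{0..<n}. (if l = c1 then X else 0)) = X"
    by (rule trans[OF sum_single[of _ c1]]) (use assms in auto)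
  moreover have "(\<Sum>l\<in>{0..<n}. (if l = c2 then Y else 0)) = Y"
    by (rule trans[OF sum_single[of _ c2]]) (use assms in auto)
  ultimately show ?thesis by (simp add: sum.distrib)
qed

definition idrows :: "nat \<Rightarrow> nat \<Rightarrow> 'a::{zero,one} mat \<Rightarrow> bool" where
  "idrows n k g \<longleftrightarrow> (\<forall>i j. k \<le> i \<longrightarrow> i < n \<longrightarrow> j < n \<longrightarrow> g $$ (i,j) = (if i = j then 1 else 0))"

lemma vanish_step:
  fixes \<psi> :: "'f::field \<Rightarrow> 'r::comm_ring_1" and h :: "'f mat \<Rightarrow> 'r"
  assumes padd: "\<And>x y. \<psi> (x + y) = \<psi> x * \<psi> y" and p0: "\<psi> 0 = 1"
    and t0: "\<And>y. (\<psi> t0 - 1) * y = 0 \<Longrightarrow> y = 0"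
    and hl: "\<And>u g. u \<in> unip n \<Longrightarrow> g \<in> mirabolic n \<Longrightarrow> h (u * g) = psiN n \<psi> u * h g"
    and hr: "\<And>u g. u \<in> unip n \<Longrightarrow> g \<in> mirabolic n \<Longrightarrow> h (g * u) = h g * psiN n \<psi> u"
    and IH: "\<And>g. g \<in> mirabolic n \<Longrightarrow> idrows n k g \<Longrightarrow> h g \<noteq> 0 \<Longrightarrow> g \<in> unip n"
    and kn: "k + 1 < n"
    and gP: "g \<in> mirabolic n" and gid: "idrows n (k+1) g" and hg: "h g \<noteq> 0"
  shows "g \<in> unip n"
proof -
  have gc: "g \<in> carrier_mat n n" using gP mirabolic_GL GL_carrier by blast
  have grow: "g $$ (i,j) = (if i = j then 1 else 0)" if "k < i" "i < n" "j < n" for i j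
    using gid that unfolding idrows_def by auto
  define u :: "'f mat" where "u = mat n n (\<lambda>(a,b). if a = b then 1 else if a = k \<and> k < b then - g $$ (k,b) else 0)"
  have uc: "u \<in> carrier_mat n n" unfolding u_def by simp
  have uN: "u \<in> unip n" unfolding unip_def u_def by auto
  define g' where "g' = u * g"
  have g'c: "g' \<in> carrier_mat n n" unfolding g'_def using uc gc by simp
  have g'P: "g' \<in> mirabolic n" unfolding g'_def using mirabolic_mult[OF unip_mirabolic[OF uN] gP] .
  have hg': "h g' \<noteq> 0"
  proof
    assume "h g' = 0"
    hence "psiN n \<psi> u * h g = 0" using hl[OF uN gP] unfolding g'_def by simp
    hence "h g = 0" using psi_cancel[OF padd p0] unfolding psiN_def by blast
    thus False using hg by simp
  qed
  have g'e: "g' $$ (a,b) = (if a = k \<and> k < b then 0 else g $$ (a,b))" if ab: "a < n" "b < n" for a b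
  proof -
    have "g' $$ (a,b) = (\<Sum>l\<in>{0..<n}. u $$ (a,l) * g $$ (l,b))"
      unfolding g'_def by (rule mult_entry[OF uc gc ab])
    also have "\<dots> = (\<Sum>l\<in>{0..<n}. (if l = a then g $$ (a,b) else 0) +
        (if l = b then (if a = k \<and> k < b then - g $$ (k,b) else 0) else 0))"
    proof (rule sum.cong[OF refl])
      fix l assume l: "l \<in> {0..<n}"
      hence ln: "l < n" by simp
      have ue: "u $$ (a,l) = (if a = l then 1 else if a = k \<and> k < l then - g $$ (k,l) else 0)"
        unfolding u_def using ab ln by simp
      show "u $$ (a,l) * g $$ (l,b) = (if l = a then g $$ (a,b) else 0) +
        (if l = b then (if a = k \<and> k < b then - g $$ (k,b) else 0) else 0)"
      proof (cases "l = a")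
        case True thus ?thesis using ue by auto
      next
        case False
        show ?thesis
        proof (cases "a = k \<and> k < l")
          case True
          have "g $$ (l,b) = (if l = b then 1 else 0)" using grow[of l b] True ln ab by simp
          thus ?thesis using ue True False by auto
        next
          case False2: False
          thus ?thesis using ue False by auto
        qed
      qed
    qed
    also have "\<dots> = g $$ (a,b) + (if a = k \<and> k < b then - g $$ (k,b) else 0)"
      by (rule sum_two_delta[OF ab])
    finally show ?thesis by auto
  qed
  have g'row: "g' $$ (i,j) = (if i = j then 1 else 0)" if "k < i" "i < n" "j < n" for i j
    using g'e[of i j] grow[of i j] that by simp
  have rowk: "g' $$ (k,j) = (if k = j then 1 else 0)" if jn: "j < n" for j
  proof (cases "k < j")
    case True thus ?thesis using g'e[of k j] jn kn by simp
  next
    case False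
    hence jk: "j \<le> k" by simp
    show ?thesis
    proof (rule ccontr)
      assume ne: "g' $$ (k,j) \<noteq> (if k = j then 1 else 0)"
      define d where "d = g' $$ (k,j) - (if k = j then 1 else 0)"
      have d0: "d \<noteq> 0" using ne unfolding d_def by simp
      define t where "t = t0 / d"
      define u2 :: "'f mat" where "u2 = mat n n (\<lambda>(a,b). if a = b then 1 else if a = j \<and> b = k + 1 then t else 0)"
      define u1 :: "'f mat" where "u1 = mat n n (\<lambda>(a,b). if a = b then 1 else if b = k + 1 \<and> a \<le> k then t * g' $$ (a,j) else 0)"
      have u2c: "u2 \<in> carrier_mat n n" unfolding u2_def by simp
      have u1c: "u1 \<in> carrier_mat n n" unfolding u1_def by simp
      have u2N: "u2 \<in> unip n" unfolding unip_def u2_def using jk by auto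
      have u1N: "u1 \<in> unip n" unfolding unip_def u1_def by auto
      have comm: "u1 * g' = g' * u2"
      proof (rule eq_matI)
        fix a b assume "a < dim_row (g' * u2)" "b < dim_col (g' * u2)"
        hence ab: "a < n" "b < n" using g'c u2c by auto
        have L: "(u1 * g') $$ (a,b) = g' $$ (a,b) + (if b = k + 1 \<and> a \<le> k then t * g' $$ (a,j) else 0)"
        proof -
          have "(u1 * g') $$ (a,b) = (\<Sum>l\<in>{0..<n}. u1 $$ (a,l) * g' $$ (l,b))"
            by (rule mult_entry[OF u1c g'c ab])
          also have "\<dots> = (\<Sum>l\<in>{0..<n}. (if l = a then g' $$ (a,b) else 0) +
             (if l = k + 1 then (if b = k + 1 \<and> a \<le> k then t * g' $$ (a,j) else 0) else 0))"
          proof (rule sum.cong[OF refl])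
            fix l assume l: "l \<in> {0..<n}"
            hence ln: "l < n" by simp
            have ue: "u1 $$ (a,l) = (if a = l then 1 else if l = k + 1 \<and> a \<le> k then t * g' $$ (a,j) else 0)"
              unfolding u1_def using ab ln by simp
            have gk1: "g' $$ (k+1,b) = (if k + 1 = b then 1 else 0)" using g'row[of "k+1" b] kn ab by simp
            show "u1 $$ (a,l) * g' $$ (l,b) = (if l = a then g' $$ (a,b) else 0) +
             (if l = k + 1 then (if b = k + 1 \<and> a \<le> k then t * g' $$ (a,j) else 0) else 0)"
            proof (cases "l = a")
              case True thus ?thesis using ue by auto
            next
              case False
              show ?thesis
              proof (cases "l = k + 1")
                case True thus ?thesis using ue False gk1 by auto
              next
                case False2: False
                thus ?thesis using ue False by auto
              qed
            qed
          qed
          also have "\<dots> = g' $$ (a,b) + (if b = k + 1 \<and> a \<le> k then t * g' $$ (a,j) else 0)"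
            by (rule sum_two_delta) (use ab kn in auto)
          finally show ?thesis .
        qed
        have R: "(g' * u2) $$ (a,b) = g' $$ (a,b) + (if b = k + 1 then g' $$ (a,j) * t else 0)"
        proof -
          have "(g' * u2) $$ (a,b) = (\<Sum>l\<in>{0..<n}. g' $$ (a,l) * u2 $$ (l,b))"
            by (rule mult_entry[OF g'c u2c ab])
          also have "\<dots> = (\<Sum>l\<in>{0..<n}. (if l = b then g' $$ (a,b) else 0) +
             (if l = j then (if b = k + 1 then g' $$ (a,j) * t else 0) else 0))"
          proof (rule sum.cong[OF refl])
            fix l assume l: "l \<in> {0..<n}"
            hence ln: "l < n" by simp
            have ue: "u2 $$ (l,b) = (if l = b then 1 else if l = j \<and> b = k + 1 then t else 0)"
              unfolding u2_def using ab ln by simp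
            show "g' $$ (a,l) * u2 $$ (l,b) = (if l = b then g' $$ (a,b) else 0) +
             (if l = j then (if b = k + 1 then g' $$ (a,j) * t else 0) else 0)"
            proof (cases "l = b")
              case True
              have "l \<noteq> j \<or> b \<noteq> k + 1" using True jk by auto
              thus ?thesis using ue True by auto
            next
              case False thus ?thesis using ue by auto
            qed
          qed
          also have "\<dots> = g' $$ (a,b) + (if b = k + 1 then g' $$ (a,j) * t else 0)"
            by (rule sum_two_delta) (use ab jk kn in auto)
          finally show ?thesis .
        qed
        have "(if b = k + 1 \<and> a \<le> k then t * g' $$ (a,j) else 0) = (if b = k + 1 then g' $$ (a,j) * t else 0)"
        proof (cases "a \<le> k")
          case True thus ?thesis by (simp add: mult.commute)
        next
          case False
          hence "g' $$ (a,j) = 0" using g'row[of a j] ab jk by simp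
          thus ?thesis by simp
        qed
        thus "(u1 * g') $$ (a,b) = (g' * u2) $$ (a,b)" using L R by simp
      qed (use u1c g'c u2c in simp_all)
      have s1: "(\<Sum>i<n - 1. u1 $$ (i, i+1)) = t * g' $$ (k,j)"
      proof -
        have "(\<Sum>i<n - 1. u1 $$ (i, i+1)) = (\<Sum>i<n - 1. if i = k then t * g' $$ (k,j) else 0)"
        proof (rule sum.cong[OF refl])
          fix i assume "i \<in> {..<n - 1}"
          hence "i + 1 < n" by auto
          thus "u1 $$ (i, i+1) = (if i = k then t * g' $$ (k,j) else 0)" unfolding u1_def by auto
        qed
        also have "\<dots> = t * g' $$ (k,j)"
          by (rule trans[OF sum_single[of _ k]]) (use kn in auto)
        finally show ?thesis .
      qed
      have s2: "(\<Sum>i<n - 1. u2 $$ (i, i+1)) = (if j = k then t else 0)"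
      proof -
        have "(\<Sum>i<n - 1. u2 $$ (i, i+1)) = (\<Sum>i<n - 1. if i = k then (if j = k then t else 0) else 0)"
        proof (rule sum.cong[OF refl])
          fix i assume "i \<in> {..<n - 1}"
          hence "i + 1 < n" by auto
          thus "u2 $$ (i, i+1) = (if i = k then (if j = k then t else 0) else 0)" unfolding u2_def by auto
        qed
        also have "\<dots> = (if j = k then t else 0)"
          by (rule trans[OF sum_single[of _ k]]) (use kn in auto)
        finally show ?thesis .
      qed
      define B where "B = (if j = k then t else (0::'f))"
      have AB: "t * g' $$ (k,j) = B + t0"
      proof -
        have "t * g' $$ (k,j) = t * d + B" unfolding d_def B_def by (auto simp: algebra_simps)
        also have "t * d = t0" unfolding t_def using d0 by simp
        finally show ?thesis by simp
      qed
      have "h g' * psiN n \<psi> u2 = psiN n \<psi> u1 * h g'"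
        using hr[OF u2N g'P] hl[OF u1N g'P] comm by simp
      hence "h g' * \<psi> B = \<psi> (B + t0) * h g'"
        unfolding psiN_def s1 s2 AB B_def by simp
      hence "\<psi> B * ((\<psi> t0 - 1) * h g') = 0" unfolding padd by (simp add: algebra_simps)
      hence "(\<psi> t0 - 1) * h g' = 0" by (rule psi_cancel[OF padd p0])
      hence "h g' = 0" by (rule t0)
      thus False using hg' by simp
    qed
  qed
  have "idrows n k g'"
    unfolding idrows_def
  proof (intro allI impI)
    fix i j assume "k \<le> i" "i < n" "j < n"
    thus "g' $$ (i,j) = (if i = j then 1 else 0)"
      using rowk g'row by (cases "i = k") auto
  qed
  hence g'N: "g' \<in> unip n" using IH[OF g'P _ hg'] by simp
  show "g \<in> unip n"
    unfolding unip_def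
  proof (intro CollectI conjI allI impI)
    show "g \<in> carrier_mat n n" by (rule gc)
  next
    fix i assume i: "i < n"
    have "g' $$ (i,i) = (if i = k \<and> k < i then 0 else g $$ (i,i))" by (rule g'e[OF i i])
    also have "\<dots> = g $$ (i,i)" by (rule if_not_P) simp
    finally have "g' $$ (i,i) = g $$ (i,i)" .
    thus "g $$ (i,i) = 1" using g'N i unfolding unip_def by auto
  next
    fix i j assume ij: "i < n" "j < n" "j < i"
    have "g' $$ (i,j) = g $$ (i,j)" using g'e[OF ij(1,2)] ij by auto
    thus "g $$ (i,j) = 0" using g'N ij unfolding unip_def by auto
  qed
qed


lemma vanish:
  fixes \<psi> :: "'f::field \<Rightarrow> 'r::comm_ring_1" and h :: "'f mat \<Rightarrow> 'r"
  assumes padd: "\<And>x y. \<psi> (x + y) = \<psi> x * \<psi> y" and p0: "\<psi> 0 = 1"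
    and t0: "\<And>y. (\<psi> t0 - 1) * y = 0 \<Longrightarrow> y = 0"
    and hl: "\<And>u g. u \<in> unip n \<Longrightarrow> g \<in> mirabolic n \<Longrightarrow> h (u * g) = psiN n \<psi> u * h g"
    and hr: "\<And>u g. u \<in> unip n \<Longrightarrow> g \<in> mirabolic n \<Longrightarrow> h (g * u) = h g * psiN n \<psi> u"
    and gP: "g \<in> mirabolic n" and hg: "h g \<noteq> 0"
  shows "g \<in> unip n"
proof -
  have Q: "\<forall>g. g \<in> mirabolic n \<longrightarrow> idrows n k g \<longrightarrow> h g \<noteq> 0 \<longrightarrow> g \<in> unip n" if "k \<le> n - 1" for k
    using that
  proof (induction k)
    case 0
    show ?case
    proof (intro allI impI)
      fix g :: "'f mat" assume g: "g \<in> mirabolic n" "idrows n 0 g"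
      have gc: "g \<in> carrier_mat n n" using g(1) mirabolic_GL GL_carrier by blast
      show "g \<in> unip n" using gc g(2) unfolding unip_def idrows_def by auto
    qed
  next
    case (Suc k)
    hence kn: "k + 1 < n" by simp
    have IH: "\<And>g. g \<in> mirabolic n \<Longrightarrow> idrows n k g \<Longrightarrow> h g \<noteq> 0 \<Longrightarrow> g \<in> unip n"
      using Suc by simp
    show ?case
    proof (intro allI impI)
      fix g :: "'f mat" assume g: "g \<in> mirabolic n" "idrows n (Suc k) g" "h g \<noteq> 0"
      show "g \<in> unip n"
        by (rule vanish_step[OF padd p0 t0 hl hr IH kn g(1) _ g(3)]) (use g(2) in simp_all)
    qed
  qed
  have "idrows n (n - 1) g"
    unfolding idrows_def
  proof (intro allI impI)
    fix i j assume ij: "n - 1 \<le> i" "i < n" "j < n"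
    hence "i = n - 1" by simp
    thus "g $$ (i,j) = (if i = j then 1 else 0)" using gP ij unfolding mirabolic_def by auto
  qed
  thus ?thesis using Q[of "n - 1"] gP hg by simp
qed

lemma psiN_mult:
  fixes \<psi> :: "'f::field \<Rightarrow> 'r::comm_ring_1"
  assumes padd: "\<And>x y. \<psi> (x + y) = \<psi> x * \<psi> y"
    and u: "u \<in> unip n" and w: "w \<in> unip n"
  shows "psiN n \<psi> (u * w) = psiN n \<psi> u * psiN n \<psi> w"
proof -
  have "(\<Sum>i<n - 1. (u * w) $$ (i, i + 1)) = (\<Sum>i<n - 1. u $$ (i, i + 1) + w $$ (i, i + 1))"
    by (rule sum.cong[OF refl]) (use superdiag_mult[OF u w] in auto)
  thus ?thesis unfolding psiN_def by (simp add: sum.distrib padd)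
qed

lemma card_unip:
  "card (unip n :: 'f::{finite,field} mat set) = card (UNIV :: 'f set) ^ card {(i,j). i < j \<and> j < (n::nat)}"
proof -
  let ?S = "{(i,j). i < j \<and> j < (n::nat)}"
  have finS: "finite ?S" by (rule finite_subset[of _ "{..<n} \<times> {..<n}"]) auto
  define mk :: "(nat \<times> nat \<Rightarrow> 'f) \<Rightarrow> 'f mat" where
    "mk \<phi> = mat n n (\<lambda>(i,j). if i = j then 1 else if i < j then \<phi> (i,j) else 0)" for \<phi>
  have img: "unip n = mk ` (PiE ?S (\<lambda>_. UNIV))"
  proof
    show "unip n \<subseteq> mk ` (PiE ?S (\<lambda>_. UNIV))"
    proof
      fix u :: "'f mat" assume u: "u \<in> unip n"
      have "u = mk (restrict (\<lambda>ij. u $$ ij) ?S)"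
      proof (rule eq_matI)
        fix i j assume "i < dim_row (mk (restrict (\<lambda>ij. u $$ ij) ?S))" "j < dim_col (mk (restrict (\<lambda>ij. u $$ ij) ?S))"
        hence ij: "i < n" "j < n" unfolding mk_def by simp_all
        show "u $$ (i,j) = mk (restrict (\<lambda>ij. u $$ ij) ?S) $$ (i,j)"
          using u ij unfolding mk_def unip_def by (auto simp: not_less_iff_gr_or_eq)
      qed (use u in \<open>auto simp: mk_def unip_def\<close>)
      moreover have "restrict (\<lambda>ij. u $$ ij) ?S \<in> PiE ?S (\<lambda>_. UNIV)" by simp
      ultimately show "u \<in> mk ` (PiE ?S (\<lambda>_. UNIV))" by (rule image_eqI)
    qed
  next
    show "mk ` (PiE ?S (\<lambda>_. UNIV)) \<subseteq> unip n"
      unfolding mk_def unip_def by auto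
  qed
  have inj: "inj_on mk (PiE ?S (\<lambda>_. UNIV))"
  proof (rule inj_onI)
    fix \<phi> \<chi> assume \<phi>: "\<phi> \<in> PiE ?S (\<lambda>_. UNIV)" and \<chi>: "\<chi> \<in> PiE ?S (\<lambda>_. UNIV)" and eq: "mk \<phi> = mk \<chi>"
    show "\<phi> = \<chi>"
    proof (rule PiE_ext[OF \<phi> \<chi>])
      fix x assume x: "x \<in> ?S"
      then obtain i j where ij: "x = (i,j)" "i < j" "j < n" by auto
      have "mk \<phi> $$ (i,j) = mk \<chi> $$ (i,j)" using eq by simp
      thus "\<phi> x = \<chi> x" using ij unfolding mk_def by simp
    qed
  qed
  have "card (unip n :: 'f mat set) = card (PiE ?S (\<lambda>_. (UNIV :: 'f set)))"
    unfolding img by (rule card_image[OF inj])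
  also have "\<dots> = card (UNIV :: 'f set) ^ card ?S" using finS by (simp add: card_PiE)
  finally show ?thesis .
qed




theorem lemma2p14:
  fixes p :: nat and n :: nat
    and \<zeta> :: "'r::comm_ring_1" and c :: "'f::{finite,field} \<Rightarrow> nat"
    and \<psi>R :: "'f \<Rightarrow> 'r"
    and scale :: "'r \<Rightarrow> 'v::ab_group_add \<Rightarrow> 'v"
    and \<rho> :: "'f mat \<Rightarrow> 'v \<Rightarrow> 'v"
    and lam :: "'v \<Rightarrow> 'r"
  assumes p_prime: "prime p"
    and char_p: "of_nat p = (0::'f)"
    and R_nontriv: "(0::'r) \<noteq> 1"
    and R_noeth: "noetherian_ring TYPE('r)"
    and p_unit: "\<exists>t::'r. of_nat p * t = 1"
    and zeta_cyclo: "(\<Sum>i<p. \<zeta> ^ i) = 0"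
    and c_add: "\<And>x y. [c (x + y) = c x + c y] (mod p)"
    and c_nontriv: "\<exists>x. \<not> p dvd c x"
    and psiR_def: "\<And>x. \<psi>R x = \<zeta> ^ c x"
    and rep: "is_rep n scale \<rho>"
    and wt: "whittaker_type n scale \<rho> \<psi>R"
    and gen: "dual_generator n scale \<rho> \<psi>R lam"
  shows "\<forall>f\<in>ind_P n \<psi>R. \<exists>v. \<forall>g\<in>mirabolic n. whittaker_fun \<rho> lam v g = f g"
proof -
  let ?N = "unip n :: 'f mat set"
  let ?P = "mirabolic n :: 'f mat set"
  let ?\<chi> = "psiN n \<psi>R"
  let ?\<chi>' = "psiN n (\<lambda>x. \<psi>R (- x))"
  note cf = char_facts[OF p_prime p_unit zeta_cyclo c_add c_nontriv psiR_def]
  have padd: "\<And>x y. \<psi>R (x + y) = \<psi>R x * \<psi>R y" by (rule cf(1))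
  have p0: "\<psi>R 0 = 1" by (rule cf(2))
  obtain t0 where t0: "\<And>y. (\<psi>R t0 - 1) * y = 0 \<Longrightarrow> y = 0" using cf(3) by blast
  have nadd: "\<psi>R (- (x + y)) = \<psi>R (- x) * \<psi>R (- y)" for x y
  proof -
    have "\<psi>R (- (x + y)) = \<psi>R ((- x) + (- y))" by simp
    also have "\<dots> = \<psi>R (- x) * \<psi>R (- y)" by (rule padd)
    finally show ?thesis .
  qed
  have chi_inv: "?\<chi>' u * ?\<chi> u = 1" for u
  proof -
    have "\<psi>R (- (\<Sum>i<n - 1. u $$ (i, i + 1))) * \<psi>R (\<Sum>i<n - 1. u $$ (i, i + 1)) = \<psi>R 0"
      unfolding padd[symmetric] by simp
    thus ?thesis unfolding psiN_def p0 .
  qed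
  have chi_mult: "?\<chi> (u * w) = ?\<chi> u * ?\<chi> w" if "u \<in> ?N" "w \<in> ?N" for u w
    by (rule psiN_mult[OF padd that])
  have chi'_mult: "?\<chi>' (u * w) = ?\<chi>' u * ?\<chi>' w" if "u \<in> ?N" "w \<in> ?N" for u w
    by (rule psiN_mult[OF nadd that])
  have M: "Modules.module scale" and rhom: "\<And>g. g \<in> GL n \<Longrightarrow> Modules.module_hom scale scale (\<rho> g)"
    and rmul: "\<And>g h. g \<in> GL n \<Longrightarrow> h \<in> GL n \<Longrightarrow> \<rho> (g * h) = \<rho> g \<circ> \<rho> h"
    and r1: "\<rho> (1\<^sub>m n) = id"
    using rep unfolding is_rep_def by auto
  have rmul': "\<rho> (g * h) x = \<rho> g (\<rho> h x)" if "g \<in> GL n" "h \<in> GL n" for g h x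
    using rmul[OF that] by simp
  obtain fw where fw: "lin_form scale fw" "surj fw" "\<And>v. fw v = 0 \<longleftrightarrow> v \<in> coinv_kernel n scale \<rho> \<psi>R"
    using wt unfolding whittaker_type_def by blast
  have lamL: "lin_form scale lam" and lamK: "\<And>v. v \<in> coinv_kernel n scale \<rho> \<psi>R \<Longrightarrow> lam v = 0"
    and lamG: "\<And>\<mu>. lin_form scale \<mu> \<Longrightarrow> (\<forall>v\<in>coinv_kernel n scale \<rho> \<psi>R. \<mu> v = 0) \<Longrightarrow> \<exists>r. \<forall>v. \<mu> v = r * lam v"
    using gen unfolding dual_generator_def by auto
  have LH: "Modules.module_hom scale (*) lam" using lamL unfolding lin_form_def .
  note Lsum = Modules.module_hom.sum[OF LH]
  have Lscale: "lam (scale r x) = r * lam x" for r x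
    by (rule Modules.module_hom.scale[OF LH])
  have Ldiff: "lam (x - y) = lam x - lam y" for x y
    by (rule Modules.module_hom.diff[OF LH])
  note Rsum = Modules.module_hom.sum[OF rhom]
  have Rscale: "\<rho> g (scale r x) = scale r (\<rho> g x)" if "g \<in> GL n" for g r x
    by (rule Modules.module_hom.scale[OF rhom[OF that]])
  obtain r where r: "\<forall>v. fw v = r * lam v" using lamG[OF fw(1)] fw(3) by blast
  obtain w where w: "fw w = 1" using fw(2) by (metis surjD)
  define v0 where "v0 = scale r w"
  have lv0: "lam v0 = 1" unfolding v0_def Lscale using r w by simp
  have A: "lam (\<rho> u x) = ?\<chi> u * lam x" if u: "u \<in> ?N" for u x
  proof -
    have "\<rho> u x - scale (?\<chi> u) x \<in> coinv_kernel n scale \<rho> \<psi>R"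
      unfolding coinv_kernel_def by (rule Modules.module.span_base[OF M]) (use u in blast)
    hence "lam (\<rho> u x - scale (?\<chi> u) x) = 0" by (rule lamK)
    thus ?thesis unfolding Ldiff Lscale by simp
  qed
  have finN: "finite ?N" by (rule finite_subset[OF _ finite_carrier[of n n]]) (auto simp: unip_def)
  have finP: "finite ?P" by (rule finite_subset[OF _ finite_carrier[of n n]]) (auto dest: mirabolic_GL GL_carrier)
  have NG: "u \<in> ?N \<Longrightarrow> u \<in> GL n" for u by (rule unip_GL)
  have PG: "u \<in> ?P \<Longrightarrow> u \<in> GL n" for u by (rule mirabolic_GL)
  have NP: "u \<in> ?N \<Longrightarrow> u \<in> ?P" for u by (rule unip_mirabolic)
  have Gc: "u \<in> GL n \<Longrightarrow> u \<in> carrier_mat n n" for u :: "'f mat" by (rule GL_carrier)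
  define v1 where "v1 = (\<Sum>u\<in>?N. scale (?\<chi>' u) (\<rho> u v0))"
  have eig: "\<rho> u v1 = scale (?\<chi> u) v1" if u: "u \<in> ?N" for u
  proof -
    have uG: "u \<in> GL n" using NG[OF u] .
    have inj: "inj_on (\<lambda>w. u * w) ?N"
      by (rule inj_onI) (use GL_cancel[OF uG] Gc NG in blast)
    have img: "(\<lambda>w. u * w) ` ?N = ?N"
      by (rule endo_inj_surj[OF finN _ inj]) (use unip_mult u in blast)
    have "\<rho> u v1 = (\<Sum>w\<in>?N. scale (?\<chi>' w) (\<rho> (u * w) v0))"
      unfolding v1_def Rsum[OF uG] Rscale[OF uG]
      by (rule sum.cong[OF refl]) (simp add: rmul'[OF uG NG])
    also have "\<dots> = (\<Sum>w\<in>?N. scale (?\<chi> u * ?\<chi>' (u * w)) (\<rho> (u * w) v0))"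
    proof (rule sum.cong[OF refl])
      fix w assume w: "w \<in> ?N"
      have "?\<chi> u * ?\<chi>' (u * w) = (?\<chi>' u * ?\<chi> u) * ?\<chi>' w"
        unfolding chi'_mult[OF u w] by (simp only: ac_simps)
      thus "scale (?\<chi>' w) (\<rho> (u * w) v0) = scale (?\<chi> u * ?\<chi>' (u * w)) (\<rho> (u * w) v0)"
        unfolding chi_inv by simp
    qed
    also have "\<dots> = (\<Sum>y\<in>(\<lambda>w. u * w) ` ?N. scale (?\<chi> u * ?\<chi>' y) (\<rho> y v0))"
      by (simp add: sum.reindex[OF inj])
    also have "\<dots> = (\<Sum>y\<in>?N. scale (?\<chi> u * ?\<chi>' y) (\<rho> y v0))" unfolding img ..
    also have "\<dots> = scale (?\<chi> u) v1"
      unfolding v1_def Modules.module.scale_sum_right[OF M] Modules.module.scale_scale[OF M] ..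
    finally show ?thesis .
  qed
  define h where "h g = lam (\<rho> g v1)" for g
  have hl: "h (u * g) = ?\<chi> u * h g" if "u \<in> ?N" "g \<in> ?P" for u g
    unfolding h_def rmul'[OF NG[OF that(1)] PG[OF that(2)]] A[OF that(1)] ..
  have hr: "h (g * u) = h g * ?\<chi> u" if "u \<in> ?N" "g \<in> ?P" for u g
    unfolding h_def rmul'[OF PG[OF that(2)] NG[OF that(1)]] eig[OF that(1)] Rscale[OF PG[OF that(2)]] Lscale
    by (simp only: ac_simps)
  have van: "g \<in> ?N" if "g \<in> ?P" "h g \<noteq> 0" for g
    by (rule vanish[OF padd p0 t0 hl hr that])
  have oneN: "1\<^sub>m n \<in> ?N" by (rule one_unip)
  have h1: "h (1\<^sub>m n) = of_nat (card ?N)"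
  proof -
    have "h (1\<^sub>m n) = (\<Sum>u\<in>?N. ?\<chi>' u * lam (\<rho> u v0))"
      unfolding h_def r1 v1_def by (simp add: Lsum Lscale)
    also have "\<dots> = (\<Sum>u\<in>?N. 1)"
      by (rule sum.cong[OF refl]) (simp add: A lv0 chi_inv)
    finally show ?thesis by simp
  qed
  have hu: "h u = ?\<chi> u * of_nat (card ?N)" if u: "u \<in> ?N" for u
  proof -
    have "u * 1\<^sub>m n = u" using Gc[OF NG[OF u]] by simp
    thus ?thesis using hl[OF u NP[OF oneN]] h1 by simp
  qed
  obtain k where k: "card (UNIV :: 'f set) = p ^ k" using card_field_ppow[OF p_prime char_p] by blast
  obtain t where t: "of_nat p * t = (1::'r)" using p_unit by blast
  define m where "m = card {(i,j). i < j \<and> j < (n::nat)}"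
  define s where "s = t ^ (k * m)"
  have cN: "of_nat (card ?N) * s = 1"
  proof -
    have "of_nat (card ?N) * s = (of_nat p * t) ^ (k * m)"
      unfolding card_unip k s_def m_def by (simp add: power_mult_distrib power_mult)
    thus ?thesis using t by simp
  qed
  have Pmul: "a * b \<in> ?P" if "a \<in> ?P" "b \<in> ?P" for a b using mirabolic_mult that .
  have Pinv: "\<exists>y\<in>?P. z * y = 1\<^sub>m n \<and> y * z = 1\<^sub>m n" if "z \<in> ?P" for z
    by (rule finite_inverse[OF finP _ NP[OF oneN] Pmul that]) (use PG in blast)+
  define ip where "ip z = (SOME y. y \<in> ?P \<and> z * y = 1\<^sub>m n \<and> y * z = 1\<^sub>m n)" for z
  have ip: "ip z \<in> ?P" "z * ip z = 1\<^sub>m n" "ip z * z = 1\<^sub>m n" if "z \<in> ?P" for z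
    using someI_ex[OF Pinv[OF that, unfolded Bex_def]] unfolding ip_def by blast+
  have Pc: "z \<in> ?P \<Longrightarrow> z \<in> carrier_mat n n" for z using Gc PG by blast
  show ?thesis
  proof
    fix f assume "f \<in> ind_P n \<psi>R"
    hence fI: "f (u * z) = ?\<chi> u * f z" if "u \<in> ?N" "z \<in> ?P" for u z
      using that unfolding ind_P_def by blast
    define V where "V = (\<Sum>z\<in>?P. scale (f z) (\<rho> (ip z) v1))"
    show "\<exists>v. \<forall>g\<in>?P. whittaker_fun \<rho> lam v g = f g"
    proof (intro exI ballI)
      fix g assume g: "g \<in> ?P"
      have gG: "g \<in> GL n" using PG[OF g] .
      have gc: "g \<in> carrier_mat n n" using Pc[OF g] .
      define Z where "Z = {z \<in> ?P. g * ip z \<in> ?N}"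
      have ZP: "Z \<subseteq> ?P" unfolding Z_def by blast
      have key: "g * ip (ip u * g) = u" "ip u * g \<in> ?P" if u: "u \<in> ?N" for u
      proof -
        have uP: "u \<in> ?P" using NP[OF u] .
        show zP: "ip u * g \<in> ?P" using Pmul[OF ip(1)[OF uP] g] .
        have uz: "u * (ip u * g) = g"
          using Pc[OF uP] Pc[OF ip(1)[OF uP]] gc ip(2)[OF uP]
          by (simp add: assoc_mult_mat[symmetric])
        have "g * ip (ip u * g) = (u * (ip u * g)) * ip (ip u * g)" unfolding uz ..
        also have "\<dots> = u * ((ip u * g) * ip (ip u * g))"
          by (rule assoc_mult_mat[OF Pc[OF uP] Pc[OF zP] Pc[OF ip(1)[OF zP]]])
        also have "\<dots> = u" using ip(2)[OF zP] Pc[OF uP] by simp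
        finally show "g * ip (ip u * g) = u" .
      qed
      have bij: "bij_betw (\<lambda>u. ip u * g) ?N Z"
        unfolding bij_betw_def
      proof
        show "inj_on (\<lambda>u. ip u * g) ?N"
        proof (rule inj_onI)
          fix u1 u2 assume u: "u1 \<in> ?N" "u2 \<in> ?N" "ip u1 * g = ip u2 * g"
          have "u1 = g * ip (ip u1 * g)" using key(1)[OF u(1)] by simp
          also have "\<dots> = g * ip (ip u2 * g)" using u(3) by simp
          also have "\<dots> = u2" using key(1)[OF u(2)] .
          finally show "u1 = u2" .
        qed
        show "(\<lambda>u. ip u * g) ` ?N = Z"
        proof
          show "(\<lambda>u. ip u * g) ` ?N \<subseteq> Z" unfolding Z_def using key by auto
          show "Z \<subseteq> (\<lambda>u. ip u * g) ` ?N"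
          proof
            fix z assume z: "z \<in> Z"
            hence zP: "z \<in> ?P" and uN: "g * ip z \<in> ?N" unfolding Z_def by auto
            define u where "u = g * ip z"
            have uP: "u \<in> ?P" using NP uN unfolding u_def by blast
            have uz: "u * z = g"
              unfolding u_def using gc Pc[OF ip(1)[OF zP]] Pc[OF zP] ip(3)[OF zP] by simp
            have "ip u * g = ip u * (u * z)" unfolding uz ..
            also have "\<dots> = (ip u * u) * z"
              by (rule assoc_mult_mat[symmetric, OF Pc[OF ip(1)[OF uP]] Pc[OF uP] Pc[OF zP]])
            also have "\<dots> = z" using ip(3)[OF uP] Pc[OF zP] by simp
            finally show "z \<in> (\<lambda>u. ip u * g) ` ?N" using uN unfolding u_def by (metis image_eqI)
          qed
        qed
      qed
      have cardZ: "card Z = card ?N" using bij_betw_same_card[OF bij] by simp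
      have "whittaker_fun \<rho> lam (scale (s * s) V) g = (s * s) * lam (\<rho> g V)"
        unfolding whittaker_fun_def Rscale[OF gG] Lscale ..
      also have "lam (\<rho> g V) = (\<Sum>z\<in>?P. f z * h (g * ip z))"
        unfolding V_def Rsum[OF gG] Lsum h_def
        by (rule sum.cong[OF refl]) (simp add: Rscale[OF gG] Lscale rmul'[OF gG PG[OF ip(1)]])
      also have "\<dots> = (\<Sum>z\<in>Z. f z * h (g * ip z))"
      proof (rule sum.mono_neutral_right[OF finP ZP], rule ballI)
        fix z assume z: "z \<in> ?P - Z"
        hence "g * ip z \<in> ?P" "g * ip z \<notin> ?N" using Pmul[OF g ip(1)] unfolding Z_def by auto
        hence "h (g * ip z) = 0" using van by blast
        thus "f z * h (g * ip z) = 0" by simp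
      qed
      also have "\<dots> = (\<Sum>z\<in>Z. f g * of_nat (card ?N))"
      proof (rule sum.cong[OF refl])
        fix z assume z: "z \<in> Z"
        hence zP: "z \<in> ?P" and uN: "g * ip z \<in> ?N" unfolding Z_def by auto
        define u where "u = g * ip z"
        have uz: "u * z = g"
          unfolding u_def using gc Pc[OF ip(1)[OF zP]] Pc[OF zP] ip(3)[OF zP] by simp
        have "f g = ?\<chi> u * f z" using fI[OF uN[folded u_def] zP] unfolding uz .
        moreover have "h u = ?\<chi> u * of_nat (card ?N)" using hu[OF uN[folded u_def]] .
        ultimately show "f z * h (g * ip z) = f g * of_nat (card ?N)"
          unfolding u_def[symmetric] by (simp only: ac_simps)
      qed
      also have "\<dots> = of_nat (card ?N) * (f g * of_nat (card ?N))"
        unfolding sum_constant cardZ ..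
      finally have "whittaker_fun \<rho> lam (scale (s * s) V) g
          = (of_nat (card ?N) * s) * (of_nat (card ?N) * s) * f g"
        by (simp only: ac_simps)
      thus "whittaker_fun \<rho> lam (scale (s * s) V) g = f g" unfolding cN by simp
    qed
  qed
qed


end
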